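(* Let $b$ be a Boolean expression, $C$ a HeyVL statement, $I$ an expectation, $\vec v$ a list of variables, and for an expectation $J$ let $\mathrm{Park}(b,C,J)$ be the HeyVL program $\mathtt{assert}\ J$ [labelled (1)]; $\mathtt{havoc}\ \vec v$; $\mathtt{validate}$; $\mathtt{assume}\ J$ [labelled (I)]; $\mathtt{if}\ b\ \{\ C;\ \mathtt{assert}\ J$ [labelled (2)]$;\ \mathtt{assume}\ ?(\mathsf{false})$ [labelled (II)] $\}\ \mathtt{else}\ \{\}$. Let $S=\mathrm{Park}(b,C,I)$, let $X,Y$ be expectations, and let $S'$ be obtained from $S$ by removing any subset of the assumptions (I) and (II), such that $\models\{X\}S'\{Y\}$. Then: (1) If $S'$ does not include (I), then $\models\{X\}\,\mathrm{Park}(b,C,\infty)\,\{Y\}$. (2) If $S'$ does not include (II), then $\models\{X\}\,\mathtt{if}\ b\ \{C\}\ \mathtt{else}\ \{\}\,\{Y\}$.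
   Context: Expectations are functions from program states to $[0,\infty]$, ordered pointwise by $\preceq$. $?(b)$ is the expectation equal to $\infty$ where $b$ holds and $0$ elsewhere. HeyVL statements and verification pre-expectation transformer $\mathrm{vp}$ (monotone in its argument): $x :\approx \sum_i p_i\cdot t_i$: $\sum_i p_i X[x/t_i]$; $\mathtt{reward}\ a$: $X+a$; $S_1;S_2$: $\mathrm{vp}[S_1](\mathrm{vp}[S_2](X))$; $\mathtt{if}(\sqcap)/\mathtt{if}(\sqcup)\{S_1\}\mathtt{else}\{S_2\}$: pointwise min/max of branch values; $\mathtt{assert}\ Y$: $\min(Y,X)$; $\mathtt{coassert}\ Y$: $\max(Y,X)$; $\mathtt{assume}\ Y$: $\infty$ where $Y\le X$, else $X$; $\mathtt{coassume}\ Y$: $0$ where $Y\ge X$, else $X$; $\mathtt{havoc}\ \vec v$/$\mathtt{cohavoc}\ \vec v$: pointwise inf/sup over values of $\vec v$; $\mathtt{validate}$: $\infty$ where $X=\infty$, else $0$; $\mathtt{covalidate}$: $0$ where $X=0$, else $\infty$. The conditional $\mathtt{if}\ b\{S_1\}\mathtt{else}\{S_2\}$ abbreviates $\mathtt{if}(\sqcap)\{\mathtt{assume}\ ?(b);S_1\}\mathtt{else}\{\mathtt{assume}\ ?(\neg b);S_2\}$. Removing a statement means replacing it by $\mathtt{skip}$, $\mathrm{vp}[\mathtt{skip}](X)=X$. Write $\models\{A\}S\{B\}$ iff $A\preceq\mathrm{vp}[S](B)$. *)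

theory Defs
  imports "HOL-Library.Extended_Nonnegative_Real"
begin

type_synonym ('x, 'v) state = "'x \<Rightarrow> 'v"
type_synonym ('x, 'v) expect = "('x, 'v) state \<Rightarrow> ennreal"

datatype ('x, 'v) heyvl =
    Skip
  | Assign 'x "(ennreal \<times> (('x, 'v) state \<Rightarrow> 'v)) list"  \<comment> \<open>x :~ sum_i p_i * t_i\<close>
  | Reward "('x, 'v) expect"
  | Seq "('x, 'v) heyvl" "('x, 'v) heyvl"
  | DemIf "('x, 'v) heyvl" "('x, 'v) heyvl"
  | AngIf "('x, 'v) heyvl" "('x, 'v) heyvl"
  | Assert "('x, 'v) expect"
  | Coassert "('x, 'v) expect"
  | Assume "('x, 'v) expect"
  | Coassume "('x, 'v) expect"
  | Havoc "'x list"
  | Cohavoc "'x list"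
  | Validate
  | Covalidate

fun vp :: "('x, 'v) heyvl \<Rightarrow> ('x, 'v) expect \<Rightarrow> ('x, 'v) expect" where
  "vp Skip X = X"
| "vp (Assign x ds) X = (\<lambda>\<sigma>. (\<Sum>(p, t)\<leftarrow>ds. p * X (\<sigma>(x := t \<sigma>))))"
| "vp (Reward a) X = (\<lambda>\<sigma>. X \<sigma> + a \<sigma>)"
| "vp (Seq S1 S2) X = vp S1 (vp S2 X)"
| "vp (DemIf S1 S2) X = (\<lambda>\<sigma>. min (vp S1 X \<sigma>) (vp S2 X \<sigma>))"
| "vp (AngIf S1 S2) X = (\<lambda>\<sigma>. max (vp S1 X \<sigma>) (vp S2 X \<sigma>))"
| "vp (Assert Y) X = (\<lambda>\<sigma>. min (Y \<sigma>) (X \<sigma>))"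
| "vp (Coassert Y) X = (\<lambda>\<sigma>. max (Y \<sigma>) (X \<sigma>))"
| "vp (Assume Y) X = (\<lambda>\<sigma>. if Y \<sigma> \<le> X \<sigma> then \<infinity> else X \<sigma>)"
| "vp (Coassume Y) X = (\<lambda>\<sigma>. if X \<sigma> \<le> Y \<sigma> then 0 else X \<sigma>)"
| "vp (Havoc vs) X = (\<lambda>\<sigma>. INF \<tau>\<in>{\<tau>. \<forall>y. y \<notin> set vs \<longrightarrow> \<tau> y = \<sigma> y}. X \<tau>)"
| "vp (Cohavoc vs) X = (\<lambda>\<sigma>. SUP \<tau>\<in>{\<tau>. \<forall>y. y \<notin> set vs \<longrightarrow> \<tau> y = \<sigma> y}. X \<tau>)"
| "vp Validate X = (\<lambda>\<sigma>. if X \<sigma> = \<infinity> then \<infinity> else 0)"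
| "vp Covalidate X = (\<lambda>\<sigma>. if X \<sigma> = 0 then 0 else \<infinity>)"

definition iverson :: "(('x, 'v) state \<Rightarrow> bool) \<Rightarrow> ('x, 'v) expect" where
  "iverson b = (\<lambda>\<sigma>. if b \<sigma> then \<infinity> else 0)"

definition Cond :: "(('x, 'v) state \<Rightarrow> bool) \<Rightarrow> ('x, 'v) heyvl \<Rightarrow> ('x, 'v) heyvl \<Rightarrow> ('x, 'v) heyvl" where
  "Cond b S1 S2 = DemIf (Seq (Assume (iverson b)) S1) (Seq (Assume (iverson (\<lambda>\<sigma>. \<not> b \<sigma>))) S2)"

definition valid :: "('x, 'v) expect \<Rightarrow> ('x, 'v) heyvl \<Rightarrow> ('x, 'v) expect \<Rightarrow> bool" where
  "valid A S B \<longleftrightarrow> A \<le> vp S B"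

text \<open>Park(b,C,J) where the flags keepI / keepII tell whether the assumptions
labelled (I) and (II) are kept (True) or removed, i.e. replaced by skip (False).\<close>
definition park_gen :: "bool \<Rightarrow> bool \<Rightarrow> (('x, 'v) state \<Rightarrow> bool) \<Rightarrow> ('x, 'v) heyvl
    \<Rightarrow> ('x, 'v) expect \<Rightarrow> 'x list \<Rightarrow> ('x, 'v) heyvl" where
  "park_gen keepI keepII b C J vs =
     Seq (Assert J)
    (Seq (Havoc vs)
    (Seq Validate
    (Seq (if keepI then Assume J else Skip)
         (Cond b (Seq C (Seq (Assert J)
                   (if keepII then Assume (iverson (\<lambda>_. False)) else Skip))) Skip))))"

definition park :: "(('x, 'v) state \<Rightarrow> bool) \<Rightarrow> ('x, 'v) heyvl
    \<Rightarrow> ('x, 'v) expect \<Rightarrow> 'x list \<Rightarrow> ('x, 'v) heyvl" where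
  "park b C J vs = park_gen True True b C J vs"

end

theory Submission
  imports Defs
begin

lemma vp_mono: "X \<le> X' \<Longrightarrow> vp S X \<le> vp S X'"
proof (induction S arbitrary: X X')
  case (Assign x ds)
  show ?case
    unfolding vp.simps le_fun_def
  proof
    fix \<sigma>
    show "(\<Sum>(p, t)\<leftarrow>ds. p * X (\<sigma>(x := t \<sigma>))) \<le> (\<Sum>(p, t)\<leftarrow>ds. p * X' (\<sigma>(x := t \<sigma>)))"
      by (rule sum_list_mono) (use Assign in \<open>auto simp: le_fun_def intro: mult_left_mono\<close>)
  qed
next
  case (Seq S1 S2)
  then show ?case by simp
next
  case (DemIf S1 S2)
  then show ?case by (auto simp: le_fun_def min.coboundedI1 min.coboundedI2 intro: min.mono)
next
  case (AngIf S1 S2)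
  have a: "vp S1 X \<le> vp S1 X'" "vp S2 X \<le> vp S2 X'" using AngIf by auto
  show ?case unfolding le_fun_def vp.simps
  proof
    fix x
    show "max (vp S1 X x) (vp S2 X x) \<le> max (vp S1 X' x) (vp S2 X' x)"
      using a by (intro max.mono) (auto simp: le_fun_def)
  qed
next
  case (Assume Y)
  then show ?case by (auto simp: le_fun_def intro: order_trans)
next
  case (Coassume Y)
  then show ?case by (auto simp: le_fun_def intro: order_trans)
next
  case (Havoc vs)
  then show ?case by (auto simp: le_fun_def intro!: INF_mono)
next
  case (Cohavoc vs)
  then show ?case by (auto simp: le_fun_def intro!: SUP_mono)
next
  case Validate
  show ?case unfolding le_fun_def vp.simps
  proof
    fix x
    have "X x \<le> X' x" using Validate by (simp add: le_fun_def)
    then show "(if X x = \<infinity> then \<infinity> else 0) \<le> (if X' x = \<infinity> then \<infinity> else (0::ennreal))"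
    proof (cases "X x = \<infinity>")
      case True
      with \<open>X x \<le> X' x\<close> have "X' x = \<infinity>" using top_unique by (metis infinity_ennreal_def)
      with True show ?thesis by simp
    qed simp
  qed
next
  case Covalidate
  show ?case unfolding le_fun_def vp.simps
  proof
    fix x
    have "X x \<le> X' x" using Covalidate by (simp add: le_fun_def)
    then show "(if X x = 0 then 0 else \<infinity>) \<le> (if X' x = 0 then 0 else (\<infinity>::ennreal))"
      by (cases "X x = 0") auto
  qed
next
  case (Assert Y)
  then show ?case unfolding le_fun_def vp.simps by (meson min.mono order_refl)
next
  case (Coassert Y)
  then show ?case unfolding le_fun_def vp.simps by (meson max.mono order_refl)
qed (auto simp: le_fun_def intro: add_right_mono)

theorem theorem7:
  fixes b :: "('x, 'v) state \<Rightarrow> bool" and C :: "('x, 'v) heyvl"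
    and I X Y :: "('x, 'v) expect" and vs :: "'x list"
    and keepI keepII :: bool
  assumes "valid X (park_gen keepI keepII b C I vs) Y"
  shows "(\<not> keepI \<longrightarrow> valid X (park b C (\<lambda>_. \<infinity>) vs) Y)
       \<and> (\<not> keepII \<longrightarrow> valid X (Cond b C Skip) Y)"
proof -
  let ?T = "if keepII then Assume (iverson (\<lambda>_. False)) else Skip :: ('x,'v) heyvl"
  let ?Cc = "Cond b (Seq C (Seq (Assert I) ?T)) Skip"
  have condmono: "vp (Cond b S1 Skip) Y \<le> vp (Cond b S2 Skip) Y" if "vp S1 Y \<le> vp S2 Y" for S1 S2
  proof -
    have "vp (Assume (iverson b)) (vp S1 Y) \<le> vp (Assume (iverson b)) (vp S2 Y)"
      by (rule vp_mono[OF that])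
    then show ?thesis unfolding Cond_def le_fun_def
      by (simp only: vp.simps) (blast intro: min.mono order_refl)
  qed
  have A: "X \<le> vp (park_gen keepI keepII b C I vs) Y" using assms by (simp add: valid_def)
  have P1: "valid X (park b C (\<lambda>_. \<infinity>) vs) Y" if nk: "\<not> keepI"
  proof -
    let ?Ci = "Cond b (Seq C (Seq (Assert (\<lambda>_. \<infinity>)) (Assume (iverson (\<lambda>_. False))))) Skip"
    have "vp (Seq (Assert I) ?T) Y \<le> vp (Seq (Assert (\<lambda>_. \<infinity>)) (Assume (iverson (\<lambda>_. False)))) Y"
      by (auto simp: le_fun_def iverson_def)
    hence "vp (Seq C (Seq (Assert I) ?T)) Y \<le> vp (Seq C (Seq (Assert (\<lambda>_. \<infinity>)) (Assume (iverson (\<lambda>_. False))))) Y"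
      by (simp add: vp_mono)
    hence c: "vp ?Cc Y \<le> vp ?Ci Y" by (rule condmono)
    have "vp (Seq (Havoc vs) Validate) (vp ?Cc Y) \<le> vp (Seq (Havoc vs) Validate) (vp ?Ci Y)"
      by (rule vp_mono[OF c])
    note m1 = this
    have m2: "vp (park_gen keepI keepII b C I vs) Y \<le> vp (Seq (Havoc vs) Validate) (vp ?Cc Y)"
      using nk unfolding park_gen_def by (auto simp: le_fun_def)
    have m3: "vp (park b C (\<lambda>_. \<infinity>) vs) Y = vp (Seq (Havoc vs) Validate) (vp ?Ci Y)"
    proof -
      have e1: "vp (Assert (\<lambda>_. \<infinity>)) Z = Z" for Z :: "('x,'v) expect" by (simp add: fun_eq_iff)
      have e2: "vp (Assume (\<lambda>_. \<infinity>)) Z = Z" for Z :: "('x,'v) expect" by (simp add: fun_eq_iff top_unique)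
      show ?thesis unfolding park_def park_gen_def
        by (simp only: if_True vp.simps(4) e1 e2)
    qed
    show ?thesis unfolding valid_def m3 using A m2 m1 by (rule order_trans[OF order_trans[OF _ _] _])
  qed
  have P2: "valid X (Cond b C Skip) Y" if nk: "\<not> keepII"
  proof -
    have "vp (Seq (Assert I) Skip) Y \<le> Y" by (auto simp: le_fun_def)
    hence "vp (Seq C (Seq (Assert I) Skip)) Y \<le> vp C Y" by (simp add: vp_mono)
    hence c: "vp ?Cc Y \<le> vp (Cond b C Skip) Y" using nk by (intro condmono) simp
    show ?thesis unfolding valid_def le_fun_def
    proof
      fix \<sigma>
      show "X \<sigma> \<le> vp (Cond b C Skip) Y \<sigma>"
      proof (cases "X \<sigma> = 0")
        case False
        let ?Z = "vp (if keepI then Assume I else Skip) (vp ?Cc Y)"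
        have "X \<sigma> \<le> vp (park_gen keepI keepII b C I vs) Y \<sigma>" using A by (simp add: le_fun_def)
        also have "\<dots> = min (I \<sigma>) (INF \<tau>\<in>{\<tau>. \<forall>y. y \<notin> set vs \<longrightarrow> \<tau> y = \<sigma> y}. (if ?Z \<tau> = \<infinity> then \<infinity> else 0))"
          unfolding park_gen_def by simp
        finally have XI: "X \<sigma> \<le> I \<sigma>" and XH: "X \<sigma> \<le> (INF \<tau>\<in>{\<tau>. \<forall>y. y \<notin> set vs \<longrightarrow> \<tau> y = \<sigma> y}. (if ?Z \<tau> = \<infinity> then \<infinity> else 0))"
          by auto
        have "(INF \<tau>\<in>{\<tau>. \<forall>y. y \<notin> set vs \<longrightarrow> \<tau> y = \<sigma> y}. (if ?Z \<tau> = \<infinity> then \<infinity> else 0)) \<le> (if ?Z \<sigma> = \<infinity> then \<infinity> else (0::ennreal))"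
        proof -
          define g where "g = (\<lambda>\<tau>. if ?Z \<tau> = \<infinity> then \<infinity> else (0::ennreal))"
          have "(INF \<tau>\<in>{\<tau>. \<forall>y. y \<notin> set vs \<longrightarrow> \<tau> y = \<sigma> y}. g \<tau>) \<le> g \<sigma>"
            by (rule INF_lower) simp
          then show ?thesis unfolding g_def .
        qed
        with XH False have Zs: "?Z \<sigma> = \<infinity>" by (auto split: if_splits)
        have "X \<sigma> \<le> vp ?Cc Y \<sigma>"
        proof (cases keepI)
          case True
          with Zs XI show ?thesis by (auto split: if_splits)
        next
          case False
          with Zs show ?thesis by simp
        qed
        also have "\<dots> \<le> vp (Cond b C Skip) Y \<sigma>" using c by (simp add: le_fun_def)
        finally show ?thesis .
      qed simp
    qed
  qed
  show ?thesis using P1 P2 by blast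
qed

end
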